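(* Let $m\geq 3$. The matching $\mu$ on the face poset of $\Delta_m^{3,2}$ has at least $(m-2)^3$ critical cells of dimension $3$.
   Context: $\Delta_m^{3,2}=\mathrm{VR}(\{0,\ldots,m\}^3;2)$, where $\{0,\ldots,m\}^3$ carries the Manhattan metric $d(x,y)=\sum_i|x_i-y_i|$ and $\mathrm{VR}(X;r)$ is the complex of finite subsets of diameter $\leq r$. Order the vertices as $v_1\prec\cdots\prec v_N$ ($N=(m+1)^3$) in the anti-lexicographic order ($x\prec y$ iff at the largest index $i$ with $x_i\neq y_i$, $x_i<y_i$). Let $T_0$ be the set of all simplices, including the empty simplex. For $i=1,\ldots,N$ put $S_i=\{\sigma\in T_{i-1}: v_i\notin\sigma,\ \sigma\cup\{v_i\}\in T_{i-1}\}$, $\mu(\sigma)=\sigma\cup\{v_i\}$ for $\sigma\in S_i$, and $T_i=T_{i-1}\setminus(S_i\cup\{\sigma\cup\{v_i\}:\sigma\in S_i\})$. The critical cells of $\mu$ are the simplices in $T_N$; the dimension of a simplex is its cardinality minus one. *)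

theory Defs
  imports Main
begin

type_synonym pt = "nat \<times> nat \<times> nat"

definition manhattan :: "pt \<Rightarrow> pt \<Rightarrow> nat" where
  "manhattan p q = (case p of (x1, x2, x3) \<Rightarrow> case q of (y1, y2, y3) \<Rightarrow>
      nat \<bar>int x1 - int y1\<bar> + nat \<bar>int x2 - int y2\<bar> + nat \<bar>int x3 - int y3\<bar>)"

definition grid :: "nat \<Rightarrow> pt set" where
  "grid m = {0..m} \<times> {0..m} \<times> {0..m}"

text \<open>Vietoris--Rips complex VR(X; r): all finite subsets of X of diameter at most r,
  including the empty simplex.\<close>
definition VR :: "pt set \<Rightarrow> nat \<Rightarrow> pt set set" where
  "VR X r = {\<sigma>. \<sigma> \<subseteq> X \<and> finite \<sigma> \<and> (\<forall>x\<in>\<sigma>. \<forall>y\<in>\<sigma>. manhattan x y \<le> r)}"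

definition Delta32 :: "nat \<Rightarrow> pt set set" where
  "Delta32 m = VR (grid m) 2"

text \<open>Vertices v_1, ..., v_N in anti-lexicographic order: the last coordinate is most
  significant, then the second, then the first.\<close>
definition verts :: "nat \<Rightarrow> pt list" where
  "verts m = [(a, b, c). c \<leftarrow> [0..<Suc m], b \<leftarrow> [0..<Suc m], a \<leftarrow> [0..<Suc m]]"

definition S_step :: "pt \<Rightarrow> pt set set \<Rightarrow> pt set set" where
  "S_step v T = {\<sigma> \<in> T. v \<notin> \<sigma> \<and> insert v \<sigma> \<in> T}"

definition T_step :: "pt \<Rightarrow> pt set set \<Rightarrow> pt set set" where
  "T_step v T = T - (S_step v T \<union> (insert v) ` S_step v T)"

definition T_final :: "nat \<Rightarrow> pt set set" where
  "T_final m = fold T_step (verts m) (Delta32 m)"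

text \<open>Critical cells of the matching mu are the simplices in T_N; dimension = card - 1.\<close>
definition critical_cells :: "nat \<Rightarrow> nat \<Rightarrow> pt set set" where
  "critical_cells m d = {\<sigma> \<in> T_final m. card \<sigma> = Suc d}"

end

theory Submission
  imports Defs
begin

definition F :: "pt set set \<Rightarrow> pt list \<Rightarrow> pt set set" where
  "F D xs = fold T_step xs D"

lemma F_snoc: "F D (xs @ [w]) = T_step w (F D xs)"
  by (simp add: F_def)

lemma T_step_sub: "T_step v T \<subseteq> T"
  by (auto simp: T_step_def)

lemma F_mono: "F D (xs @ ys) \<subseteq> F D xs"
proof (induction ys rule: rev_induct)
  case Nil then show ?case by simp
next
  case (snoc y ys)
  then show ?case using T_step_sub[of y "F D (xs @ ys)"] F_snoc[of D "xs @ ys" y] by auto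
qed

lemma F_sub: "F D xs \<subseteq> D"
  using F_mono[of D "[]" xs] by (simp add: F_def)

lemma removed_cases:
  assumes "\<sigma> \<in> T" "\<sigma> \<notin> T_step v T"
  shows "(v \<notin> \<sigma> \<and> insert v \<sigma> \<in> T) \<or> (v \<in> \<sigma> \<and> \<sigma> - {v} \<in> T)"
  using assms by (auto simp: T_step_def S_step_def)

lemma pair_removed:
  assumes "\<sigma> \<in> T" "v \<notin> \<sigma>" "insert v \<sigma> \<in> T"
  shows "\<sigma> \<notin> T_step v T"
  using assms by (auto simp: T_step_def S_step_def)

lemma tri_removed:
  assumes "K = insert u L" "u \<notin> L" "K \<in> D"
    and "\<forall>w\<in>set A. w \<notin> K \<and> insert w K \<notin> D"
  shows "L \<notin> F D (A @ [u])"
proof -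
  have "K \<in> F D A'" if "set A' \<subseteq> set A" for A'
    using that
  proof (induction A' rule: rev_induct)
    case Nil then show ?case using assms by (simp add: F_def)
  next
    case (snoc w A')
    then have KA: "K \<in> F D A'" and w: "w \<notin> K" "insert w K \<notin> D" using assms(4) by auto
    have "insert w K \<notin> F D A'" using w F_sub by blast
    then show ?case using removed_cases[OF KA] w F_snoc by metis
  qed
  then have KA: "K \<in> F D A" by blast
  show ?thesis
  proof (cases "L \<in> F D A")
    case True
    then show ?thesis using pair_removed[OF True assms(2)] KA assms(1) F_snoc by metis
  next
    case False
    then show ?thesis using F_mono[of D A "[u]"] by blast
  qed
qed

lemma persist:
  assumes "Q \<in> D" "\<And>w. w \<notin> Q \<Longrightarrow> insert w Q \<notin> D"
    and "\<And>xs w ys. vs = xs @ w # ys \<Longrightarrow> w \<in> Q \<Longrightarrow> Q - {w} \<notin> F D xs"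
  shows "vs = zs @ ys \<Longrightarrow> Q \<in> F D zs"
proof (induction zs arbitrary: ys rule: rev_induct)
  case Nil then show ?case using assms by (simp add: F_def)
next
  case (snoc w zs)
  then have Qz: "Q \<in> F D zs" by auto
  show ?case
  proof (rule ccontr)
    assume "Q \<notin> F D (zs @ [w])"
    then have "Q \<notin> T_step w (F D zs)" by (simp add: F_snoc)
    from removed_cases[OF Qz this] show False
    proof
      assume "w \<notin> Q \<and> insert w Q \<in> F D zs"
      then show False using assms(2) F_sub by blast
    next
      assume "w \<in> Q \<and> Q - {w} \<in> F D zs"
      then show False using assms(3)[of zs w ys] snoc.prems by auto
    qed
  qed
qed

definition prec :: "pt \<Rightarrow> pt \<Rightarrow> bool" where
  "prec p q = (case p of (a,b,c) \<Rightarrow> case q of (a',b',c') \<Rightarrow>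
     c < c' \<or> (c = c' \<and> (b < b' \<or> (b = b' \<and> a < a'))))"

lemma sorted_wrt_concat_map:
  "sorted_wrt P xs \<Longrightarrow> (\<forall>x\<in>set xs. sorted_wrt R (f x))
   \<Longrightarrow> (\<forall>x y. P x y \<longrightarrow> (\<forall>a\<in>set (f x). \<forall>b\<in>set (f y). R a b))
   \<Longrightarrow> sorted_wrt R (concat (map f xs))"
  by (induction xs) (auto simp: sorted_wrt_append)

lemma verts_eq: "verts m = concat (map (\<lambda>c. concat (map (\<lambda>b. map (\<lambda>a. (a,b,c)) [0..<Suc m]) [0..<Suc m])) [0..<Suc m])"
  by (simp add: verts_def)

lemma verts_sorted: "sorted_wrt prec (verts m)"
  unfolding verts_eq
  apply (rule sorted_wrt_concat_map[where P="(<)"])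
    apply (simp del: upt_Suc)
   apply (intro ballI)
   apply (rule sorted_wrt_concat_map[where P="(<)"])
     apply (simp del: upt_Suc)
    apply (auto simp: sorted_wrt_map prec_def simp del: upt_Suc)
  done

lemma verts_set: "set (verts m) = grid m"
  unfolding verts_eq grid_def by (auto simp del: upt_Suc simp add: image_iff)

lemma prec_asym: "prec p q \<Longrightarrow> \<not> prec q p"
  by (auto simp: prec_def split: prod.splits)

lemma man_eq: "int (manhattan (x1,x2,x3) (y1,y2,y3)) = \<bar>int x1 - int y1\<bar> + \<bar>int x2 - int y2\<bar> + \<bar>int x3 - int y3\<bar>"
  by (simp add: manhattan_def)

lemma man_le2: "manhattan (x1,x2,x3) (y1,y2,y3) \<le> 2 \<longleftrightarrow> \<bar>int x1 - int y1\<bar> + \<bar>int x2 - int y2\<bar> + \<bar>int x3 - int y3\<bar> \<le> 2"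
  using man_eq[of x1 x2 x3 y1 y2 y3] by linarith

lemma Delta_pair: "\<sigma> \<in> Delta32 m \<Longrightarrow> x \<in> \<sigma> \<Longrightarrow> y \<in> \<sigma> \<Longrightarrow> manhattan x y \<le> 2"
  by (auto simp: Delta32_def VR_def)

definition sq :: "nat \<Rightarrow> nat \<Rightarrow> nat \<Rightarrow> pt set" where
  "sq a b c = {(a,b,c),(Suc a,b,c),(a,Suc b,c),(Suc a,Suc b,c)}"

lemma sq_max:
  assumes "w \<notin> sq a b c" shows "insert w (sq a b c) \<notin> Delta32 m"
proof
  assume D: "insert w (sq a b c) \<in> Delta32 m"
  obtain x y z where w: "w = (x,y,z)" by (cases w) auto
  have "manhattan (x,y,z) p \<le> 2" if "p \<in> sq a b c" for p
    using Delta_pair[OF D, of w p] that w by auto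
  then have "manhattan (x,y,z) (a,b,c) \<le> 2" "manhattan (x,y,z) (Suc a,b,c) \<le> 2"
    "manhattan (x,y,z) (a,Suc b,c) \<le> 2" "manhattan (x,y,z) (Suc a,Suc b,c) \<le> 2"
    by (auto simp: sq_def)
  then have h: "\<bar>int x - int a\<bar> + \<bar>int y - int b\<bar> + \<bar>int z - int c\<bar> \<le> 2"
     "\<bar>int x - int (Suc a)\<bar> + \<bar>int y - int b\<bar> + \<bar>int z - int c\<bar> \<le> 2"
     "\<bar>int x - int a\<bar> + \<bar>int y - int (Suc b)\<bar> + \<bar>int z - int c\<bar> \<le> 2"
     "\<bar>int x - int (Suc a)\<bar> + \<bar>int y - int (Suc b)\<bar> + \<bar>int z - int c\<bar> \<le> 2"
    unfolding man_le2 by auto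
  define X where "X = int x - int a"
  define Y where "Y = int y - int b"
  define Z where "Z = int z - int c"
  have h': "\<bar>X\<bar> + \<bar>Y\<bar> + \<bar>Z\<bar> \<le> 2" "\<bar>X - 1\<bar> + \<bar>Y\<bar> + \<bar>Z\<bar> \<le> 2"
    "\<bar>X\<bar> + \<bar>Y - 1\<bar> + \<bar>Z\<bar> \<le> 2" "\<bar>X - 1\<bar> + \<bar>Y - 1\<bar> + \<bar>Z\<bar> \<le> 2"
    using h unfolding X_def Y_def Z_def by (simp_all add: algebra_simps)
  have ax: "\<bar>X\<bar> + \<bar>X - 1\<bar> \<ge> 1" by arith
  have ay: "\<bar>Y\<bar> + \<bar>Y - 1\<bar> \<ge> 1" by arith
  have z1: "\<bar>Z\<bar> \<le> 1" using h'(1,4) ax ay by linarith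
  have z0: "Z = 0"
  proof (rule ccontr)
    assume "Z \<noteq> 0"
    then have "\<bar>Z\<bar> = 1" using z1 by arith
    then have e: "\<bar>X\<bar> + \<bar>Y\<bar> \<le> 1" "\<bar>X - 1\<bar> + \<bar>Y\<bar> \<le> 1" "\<bar>X\<bar> + \<bar>Y - 1\<bar> \<le> 1" "\<bar>X - 1\<bar> + \<bar>Y - 1\<bar> \<le> 1"
      using h' by linarith+
    have "\<bar>X\<bar> + \<bar>X - 1\<bar> = 1" "\<bar>Y\<bar> + \<bar>Y - 1\<bar> = 1" using e(1,4) ax ay by linarith+
    then have "0 \<le> X" "X \<le> 1" "0 \<le> Y" "Y \<le> 1" by arith+
    then show False using e by arith
  qed
  have "0 \<le> X" "X \<le> 1" "0 \<le> Y" "Y \<le> 1" using h' z0 by arith+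
  then have "(x = a \<or> x = Suc a) \<and> (y = b \<or> y = Suc b) \<and> z = c"
    using z0 unfolding X_def Y_def Z_def by linarith
  then have "(x,y,z) \<in> sq a b c" unfolding sq_def by auto
  then show False using assms w by simp
qed

lemma tri_geo:
  assumes d: "q1 = Suc p1 \<or> p1 = Suc q1" "q2 = Suc p2 \<or> p2 = Suc q2"
    and K: "K = {(p1,p2,Suc c'),(q1,p2,Suc c'),(p1,q2,Suc c'),(p1,p2,c')}"
    and pr: "prec w' (p1,p2,c')"
  shows "w' \<notin> K \<and> insert w' K \<notin> Delta32 m"
proof
  obtain x y z where w: "w' = (x,y,z)" by (cases w') auto
  show "w' \<notin> K" using pr unfolding K w prec_def by auto
  show "insert w' K \<notin> Delta32 m"
  proof
    assume D: "insert w' K \<in> Delta32 m"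
    have "manhattan (x,y,z) p \<le> 2" if "p \<in> K" for p
      using Delta_pair[OF D, of w' p] that w by auto
    then have h: "\<bar>int x - int p1\<bar> + \<bar>int y - int p2\<bar> + \<bar>int z - int (Suc c')\<bar> \<le> 2"
      "\<bar>int x - int q1\<bar> + \<bar>int y - int p2\<bar> + \<bar>int z - int (Suc c')\<bar> \<le> 2"
      "\<bar>int x - int p1\<bar> + \<bar>int y - int q2\<bar> + \<bar>int z - int (Suc c')\<bar> \<le> 2"
      unfolding K man_le2[symmetric] by auto
    have p: "z < c' \<or> (z = c' \<and> (y < p2 \<or> (y = p2 \<and> x < p1)))"
      using pr unfolding w prec_def by auto
    define A where "A = int x - int p1"
    define B where "B = int y - int p2"
    define Z where "Z = int (Suc c') - int z"
    have Z1: "Z \<ge> 1" "Z = 1 \<longrightarrow> (B < 0 \<or> (B = 0 \<and> A < 0))"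
      using p unfolding A_def B_def Z_def by auto
    have h1: "\<bar>A\<bar> + \<bar>B\<bar> + Z \<le> 2" using h(1) Z1 unfolding A_def B_def Z_def by simp
    from d show False
    proof (elim disjE)
      assume "q1 = Suc p1" "q2 = Suc p2"
      then have "\<bar>A - 1\<bar> + \<bar>B\<bar> + Z \<le> 2" "\<bar>A\<bar> + \<bar>B - 1\<bar> + Z \<le> 2"
        using h(2,3) Z1 unfolding A_def B_def Z_def by (simp_all add: algebra_simps)
      then show False using h1 Z1 by arith
    next
      assume "q1 = Suc p1" "p2 = Suc q2"
      then have "\<bar>A - 1\<bar> + \<bar>B\<bar> + Z \<le> 2" "\<bar>A\<bar> + \<bar>B + 1\<bar> + Z \<le> 2"
        using h(2,3) Z1 unfolding A_def B_def Z_def by (simp_all add: algebra_simps)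
      then show False using h1 Z1 by arith
    next
      assume "p1 = Suc q1" "q2 = Suc p2"
      then have "\<bar>A + 1\<bar> + \<bar>B\<bar> + Z \<le> 2" "\<bar>A\<bar> + \<bar>B - 1\<bar> + Z \<le> 2"
        using h(2,3) Z1 unfolding A_def B_def Z_def by (simp_all add: algebra_simps)
      then show False using h1 Z1 by arith
    next
      assume "p1 = Suc q1" "p2 = Suc q2"
      then have "\<bar>A + 1\<bar> + \<bar>B\<bar> + Z \<le> 2" "\<bar>A\<bar> + \<bar>B + 1\<bar> + Z \<le> 2"
        using h(2,3) Z1 unfolding A_def B_def Z_def by (simp_all add: algebra_simps)
      then show False using h1 Z1 by arith
    qed
  qed
qed

lemma K_Delta:
  assumes d: "q1 = Suc p1 \<or> p1 = Suc q1" "q2 = Suc p2 \<or> p2 = Suc q2"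
    and b: "p1 \<le> m" "q1 \<le> m" "p2 \<le> m" "q2 \<le> m" "Suc c' \<le> m"
  shows "{(p1,p2,Suc c'),(q1,p2,Suc c'),(p1,q2,Suc c'),(p1,p2,c')} \<in> Delta32 m"
  using d b unfolding Delta32_def VR_def grid_def
  by (elim disjE) (auto simp: manhattan_def)

lemma sq_Delta:
  assumes "a < m" "b < m" "c \<le> m"
  shows "sq a b c \<in> Delta32 m"
  using assms unfolding Delta32_def VR_def grid_def sq_def
  by (auto simp: manhattan_def)

lemma tri_all:
  assumes d: "q1 = Suc p1 \<or> p1 = Suc q1" "q2 = Suc p2 \<or> p2 = Suc q2"
    and b: "p1 \<le> m" "q1 \<le> m" "p2 \<le> m" "q2 \<le> m" "Suc c' \<le> m"
    and L: "L = {(p1,p2,Suc c'),(q1,p2,Suc c'),(p1,q2,Suc c')}"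
    and pw: "prec (p1,p2,c') w"
  shows "\<exists>u. u \<notin> L \<and> insert u L \<in> Delta32 m \<and> prec u w \<and> u \<in> grid m \<and>
     (\<forall>w'. prec w' u \<longrightarrow> w' \<notin> insert u L \<and> insert w' (insert u L) \<notin> Delta32 m)"
proof (intro exI conjI allI impI)
  have e: "insert (p1,p2,c') L = {(p1,p2,Suc c'),(q1,p2,Suc c'),(p1,q2,Suc c'),(p1,p2,c')}"
    using L by auto
  show "(p1,p2,c') \<notin> L" using L by auto
  show "insert (p1,p2,c') L \<in> Delta32 m" unfolding e by (rule K_Delta[OF d b])
  show "prec (p1,p2,c') w" by fact
  show "(p1,p2,c') \<in> grid m" using b by (auto simp: grid_def)
  fix w' assume "prec w' (p1,p2,c')"
  then show "w' \<notin> insert (p1,p2,c') L" "insert w' (insert (p1,p2,c') L) \<notin> Delta32 m"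
    using tri_geo[OF d e] by blast+
qed

lemma sq_tri:
  assumes "a < m" "b < m" "Suc c' \<le> m" "w \<in> sq a b (Suc c')"
  shows "\<exists>u. u \<notin> sq a b (Suc c') - {w} \<and> insert u (sq a b (Suc c') - {w}) \<in> Delta32 m \<and> prec u w \<and> u \<in> grid m \<and>
     (\<forall>w'. prec w' u \<longrightarrow> w' \<notin> insert u (sq a b (Suc c') - {w}) \<and> insert w' (insert u (sq a b (Suc c') - {w})) \<notin> Delta32 m)"
proof -
  from assms(4) consider "w = (a,b,Suc c')" | "w = (Suc a,b,Suc c')" | "w = (a,Suc b,Suc c')" | "w = (Suc a,Suc b,Suc c')"
    unfolding sq_def by auto
  then show ?thesis
  proof cases
    case 1
    show ?thesis
      by (rule tri_all[of a "Suc a" b "Suc b"]) (use assms 1 in \<open>auto simp: sq_def prec_def\<close>)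
  next
    case 2
    show ?thesis
      by (rule tri_all[of "Suc a" a b "Suc b"]) (use assms 2 in \<open>auto simp: sq_def prec_def\<close>)
  next
    case 3
    show ?thesis
      by (rule tri_all[of a "Suc a" "Suc b" b]) (use assms 3 in \<open>auto simp: sq_def prec_def\<close>)
  next
    case 4
    show ?thesis
      by (rule tri_all[of "Suc a" a "Suc b" b]) (use assms 4 in \<open>auto simp: sq_def prec_def\<close>)
  qed
qed

lemma sq_crit:
  assumes ab: "a < m" "b < m" and c: "Suc c' \<le> m"
  shows "sq a b (Suc c') \<in> T_final m"
proof -
  let ?Q = "sq a b (Suc c')" and ?D = "Delta32 m" and ?vs = "verts m"
  have srt: "sorted_wrt prec ?vs" by (rule verts_sorted)
  have "?Q \<in> F ?D ?vs"
  proof (rule persist[where vs = "?vs" and ys = "[]"])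
    show "?Q \<in> ?D" using sq_Delta ab c by simp
    show "\<And>w. w \<notin> ?Q \<Longrightarrow> insert w ?Q \<notin> ?D" by (rule sq_max)
    show "?vs = ?vs @ []" by simp
    fix xs w ys assume vs: "?vs = xs @ w # ys" and wQ: "w \<in> ?Q"
    obtain u where u: "u \<notin> ?Q - {w}" "insert u (?Q - {w}) \<in> ?D" "prec u w" "u \<in> grid m"
      "\<forall>w'. prec w' u \<longrightarrow> w' \<notin> insert u (?Q - {w}) \<and> insert w' (insert u (?Q - {w})) \<notin> ?D"
      using sq_tri[OF ab c wQ] by blast
    have uv: "u \<in> set ?vs" using u(4) verts_set by blast
    have "u \<notin> set (w # ys)"
    proof
      assume "u \<in> set (w # ys)"
      moreover have "u \<noteq> w" using u(3) prec_asym by blast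
      moreover have "\<forall>y\<in>set ys. prec w y" using srt unfolding vs by (simp add: sorted_wrt_append)
      ultimately show False using u(3) prec_asym by auto
    qed
    then have "u \<in> set xs" using uv vs by auto
    then obtain A B where xs: "xs = A @ u # B" by (meson split_list)
    have "\<forall>w'\<in>set A. prec w' u" using srt unfolding vs xs by (simp add: sorted_wrt_append)
    then have "?Q - {w} \<notin> F ?D (A @ [u])"
      using tri_removed[OF refl u(1) u(2)] u(5) by blast
    then show "?Q - {w} \<notin> F ?D xs" using F_mono[of ?D "A @ [u]" B] xs by auto
  qed
  then show ?thesis by (simp add: F_def T_final_def)
qed

lemma sq_card: "card (sq a b c) = 4"
  by (simp add: sq_def)

lemma sq_eq:
  assumes e: "sq a b c = sq a' b' c'" shows "(a,b,c) = (a',b',c')"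
proof -
  have "(a,b,c) \<in> sq a b c" "(a',b',c') \<in> sq a' b' c'" by (simp_all add: sq_def)
  then have "(a,b,c) \<in> sq a' b' c'" "(a',b',c') \<in> sq a b c"
    using e by simp_all
  then show ?thesis
    unfolding sq_def by auto
qed

lemma sq_inj: "inj_on (\<lambda>(a,b,c). sq a b c) X"
proof (rule inj_onI)
  fix x y :: pt assume "(\<lambda>(a,b,c). sq a b c) x = (\<lambda>(a,b,c). sq a b c) y"
  moreover obtain a b c where "x = (a,b,c)" by (cases x) auto
  moreover obtain a' b' c' where "y = (a',b',c')" by (cases y) auto
  ultimately show "x = y" using sq_eq[of a b c a' b' c'] by simp
qed

theorem lemma4p11:
  fixes m :: nat
  assumes "m \<ge> 3"
  shows "(m - 2) ^ 3 \<le> card (critical_cells m 3)"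
proof -
  let ?X = "{0..<m} \<times> {0..<m} \<times> {1..m}"
  have sub: "(\<lambda>(a,b,c). sq a b c) ` ?X \<subseteq> critical_cells m 3"
  proof -
    have "sq a b c \<in> critical_cells m 3" if "(a,b,c) \<in> ?X" for a b c
    proof -
    from that have "a < m" "b < m" "Suc (c - 1) \<le> m" "c = Suc (c - 1)" by auto
    then show "sq a b c \<in> critical_cells m 3"
      using sq_crit[of a m b "c - 1"] sq_card by (auto simp: critical_cells_def)
    qed
    then show ?thesis by auto
  qed
  have fin: "finite (critical_cells m 3)"
  proof (rule finite_subset)
    show "critical_cells m 3 \<subseteq> Pow (grid m)"
      using F_sub[of "Delta32 m" "verts m"]
      by (auto simp: critical_cells_def T_final_def F_def Delta32_def VR_def)
    show "finite (Pow (grid m))" by (simp add: grid_def)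
  qed
  have "card ?X = m ^ 3" by (simp add: card_cartesian_product power3_eq_cube)
  moreover have "card ((\<lambda>(a,b,c). sq a b c) ` ?X) = card ?X"
    by (rule card_image[OF sq_inj])
  moreover have "(m - 2) ^ 3 \<le> m ^ 3" by (simp add: power_mono)
  ultimately show ?thesis using card_mono[OF fin sub] by linarith
qed

end
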